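(* For integers $\ell\ge0$ and $a\in\mathbb{C}$ define the polynomial in $s$ \[ P_{\ell}(s,a)=\begin{cases}\dfrac{2^{\ell+1}}{(2\ell+1)!!}s^{2\ell+1}, & a=0,\\[8pt] \Bigl(-\dfrac{2}{a}\Bigr)^{\ell+1}\displaystyle\sum_{k=0}^{\ell}c^{(\ell)}_k a^{-k}s^{\ell-k}, & a\ne0,\end{cases} \] where $c^{(\ell)}_0=1$ and $c^{(\ell)}_k=\frac{1}{2^k k!}\prod_{j=1-k}^{k}(\ell+j)$ for $1\le k\le\ell$. Then for $s\neq0$, \[ \frac{\partial}{\partial s}\Bigl(\frac{1}{2s}\frac{\partial}{\partial s}\Bigr)^{\ell}\bigl\{e^{-as}P_{\ell}(s,a)\bigr\}=2e^{-as}. \]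
   Context: $(2\ell+1)!!=1\cdot3\cdots(2\ell+1)$. The operator $\bigl(\frac{1}{2s}\frac{\partial}{\partial s}\bigr)^{\ell}$ means $\ell$-fold application of $f\mapsto\frac{1}{2s}f'$. *)

theory Defs
  imports "HOL-Analysis.Analysis"
begin

text \<open>Odd double factorial: odd_dfact m = (2m+1)!! = 1 * 3 * ... * (2m+1).\<close>
definition odd_dfact :: "nat \<Rightarrow> nat" where
  "odd_dfact m = (\<Prod>i\<le>m. 2 * i + 1)"

definition cco :: "nat \<Rightarrow> nat \<Rightarrow> complex" where
  "cco l k = (if k = 0 then 1
     else (\<Prod>j\<in>{1 - int k..int k}. of_int (int l + j)) / (2 ^ k * fact k))"

definition Ppoly :: "nat \<Rightarrow> complex \<Rightarrow> complex \<Rightarrow> complex" where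
  "Ppoly l s a = (if a = 0
     then 2 ^ (l + 1) / of_nat (odd_dfact l) * s ^ (2 * l + 1)
     else (- 2 / a) ^ (l + 1) * (\<Sum>k\<le>l. cco l k * inverse a ^ k * s ^ (l - k)))"

definition Dop :: "(complex \<Rightarrow> complex) \<Rightarrow> complex \<Rightarrow> complex" where
  "Dop f = (\<lambda>s. deriv f s / (2 * s))"

end

theory Submission
  imports Defs
begin

definition R :: "int \<Rightarrow> int \<Rightarrow> int" where "R lo hi = (\<Prod>i\<in>{lo..hi}. i)"

lemma Q_R: "(\<Prod>j\<in>{1 - int k..int k}. (int l + j)) = R (int l + 1 - int k) (int l + int k)"
proof -
  have "(\<lambda>j. int l + j) ` {1 - int k..int k} = {int l + 1 - int k..int l + int k}"
    by (auto simp: image_iff intro!: exI[of _ "x - int l" for x])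
  moreover have "inj_on (\<lambda>j. int l + j) A" for A by (auto simp: inj_on_def)
  ultimately show ?thesis unfolding R_def
    by (metis (no_types, lifting) prod.reindex_cong)
qed

lemma R_top: "lo \<le> hi + 1 \<Longrightarrow> R lo (hi + 1) = R lo hi * (hi + 1)"
proof -
  assume "lo \<le> hi + 1"
  hence "{lo..hi+1} = insert (hi+1) {lo..hi}" by auto
  thus ?thesis unfolding R_def by (simp add: mult.commute)
qed

lemma R_bot: "lo \<le> hi \<Longrightarrow> R lo hi = lo * R (lo + 1) hi"
proof -
  assume "lo \<le> hi"
  hence "{lo..hi} = insert lo {lo+1..hi}" by auto
  thus ?thesis unfolding R_def by simp
qed

lemma Q_rec: "R (int (l+1) + 1 - int (k+1)) (int (l+1) + int (k+1)) - R (int l + 1 - int (k+1)) (int l + int (k+1))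
   = 2 * (int k + 1) * (int l + 1 - int k) * R (int (l+1) + 1 - int k) (int (l+1) + int k)"
proof -
  define M where "M = R (int l + 2 - int k) (int l + 1 + int k)"
  have a1: "R (int l + 1 - int k) (int l + 1 + int k + 1) = R (int l + 1 - int k) (int l + 1 + int k) * (int l + 1 + int k + 1)"
    by (rule R_top) simp
  have a2: "R (int l + 1 - int k) (int l + 1 + int k) = (int l + 1 - int k) * M"
    unfolding M_def by (subst R_bot) (simp_all add: algebra_simps)
  have a3: "R (int l - int k) (int l + 1 + int k) = (int l - int k) * R (int l + 1 - int k) (int l + 1 + int k)"
    by (subst R_bot) (simp_all add: algebra_simps)
  have e1: "R (int (l+1) + 1 - int (k+1)) (int (l+1) + int (k+1)) = (int l + 1 - int k) * M * (int l + 2 + int k)"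
  proof -
    have "R (int (l+1) + 1 - int (k+1)) (int (l+1) + int (k+1)) = R (int l + 1 - int k) (int l + 1 + int k + 1)"
      by (simp add: algebra_simps)
    also have "\<dots> = R (int l + 1 - int k) (int l + 1 + int k) * (int l + 1 + int k + 1)" by (rule a1)
    also have "\<dots> = (int l + 1 - int k) * M * (int l + 1 + int k + 1)" by (simp only: a2)
    finally show ?thesis by (simp add: algebra_simps)
  qed
  have e2: "R (int l + 1 - int (k+1)) (int l + int (k+1)) = (int l - int k) * ((int l + 1 - int k) * M)"
  proof -
    have "R (int l + 1 - int (k+1)) (int l + int (k+1)) = R (int l - int k) (int l + 1 + int k)"
      by (simp add: algebra_simps)
    thus ?thesis using a3 a2 by simp
  qed
  have e3: "R (int (l+1) + 1 - int k) (int (l+1) + int k) = M"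
    unfolding M_def by (simp add: algebra_simps)
  show ?thesis unfolding e1 e2 e3 by (simp add: algebra_simps)
qed


lemma cco_R: "cco l k = of_int (R (int l + 1 - int k) (int l + int k)) / (2 ^ k * fact k)"
  unfolding cco_def Q_R[symmetric] by (simp add: of_int_prod)

lemma cco_zero: "cco l (l+1) = 0"
proof -
  have "(0::int) \<in> {int l + 1 - int (l+1)..int l + int (l+1)}" by simp
  hence "R (int l + 1 - int (l+1)) (int l + int (l+1)) = 0" unfolding R_def
    by (intro prod_zero) auto
  thus ?thesis by (simp add: cco_R)
qed

lemma cco_rec: "k \<le> l \<Longrightarrow> cco (l+1) (k+1) - cco l (k+1) = of_nat (l+1-k) * cco (l+1) k"
proof -
  assume "k \<le> l"
  have "cco (l+1) (k+1) - cco l (k+1) = of_int (R (int (l+1) + 1 - int (k+1)) (int (l+1) + int (k+1)) - R (int l + 1 - int (k+1)) (int l + int (k+1))) / (2 ^ (k+1) * fact (k+1))"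
    unfolding cco_R by (simp add: diff_divide_distrib)
  also have "\<dots> = of_int (2 * (int k + 1) * (int l + 1 - int k) * R (int (l+1) + 1 - int k) (int (l+1) + int k)) / (2 ^ (k+1) * fact (k+1))"
    by (simp only: Q_rec)
  also have "\<dots> = of_nat (l+1-k) * cco (l+1) k"
  proof -
    define X where "X = R (int (l+1) + 1 - int k) (int (l+1) + int k)"
    have i: "(2 * (int k + 1) * (int l + 1 - int k) * X) = 2 * int (k+1) * int (l+1-k) * X"
      using \<open>k \<le> l\<close> by (simp add: of_nat_diff algebra_simps)
    have f: "fact (k+1) = (of_nat (k+1) :: complex) * fact k" by simp
    have nz: "(fact k :: complex) \<noteq> 0" "(of_nat (k+1) :: complex) \<noteq> 0" "1 + (of_nat k :: complex) \<noteq> 0"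
    proof -
      have "(1 + of_nat k :: complex) = of_nat (Suc k)" by simp
      moreover have "(of_nat (Suc k) :: complex) \<noteq> 0" by (simp only: of_nat_eq_0_iff)
      ultimately show "(fact k :: complex) \<noteq> 0" "(of_nat (k+1) :: complex) \<noteq> 0" "1 + (of_nat k :: complex) \<noteq> 0" by simp_all
    qed
    have g: "\<And>(c::complex) d e n x. c \<noteq> 0 \<Longrightarrow> d \<noteq> 0 \<Longrightarrow> e \<noteq> 0 \<Longrightarrow>
       (2*d*n*x)/((2*c)*(d*e)) = n*(x/(c*e))" by (simp add: field_simps)
    have "(of_int (2 * int (k+1) * int (l+1-k) * X) :: complex) = 2 * of_nat (k+1) * of_nat (l+1-k) * of_int X"
      by simp
    moreover have "(2::complex) ^ (k+1) = 2 * 2^k" by simp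
    ultimately show ?thesis unfolding cco_R X_def[symmetric] i f
      using g[of "2^k" "of_nat (k+1)" "fact k" "of_nat (l+1-k)" "of_int X"] nz by simp
  qed
  finally show ?thesis .
qed


definition Sp :: "nat \<Rightarrow> complex \<Rightarrow> complex \<Rightarrow> complex" where
  "Sp n b t = (\<Sum>k\<le>n. cco n k * b^k * t^(n-k))"

definition Sd :: "nat \<Rightarrow> complex \<Rightarrow> complex \<Rightarrow> complex" where
  "Sd n b t = (\<Sum>k\<le>n. cco n k * b^k * (of_nat (n-k) * t^(n-k-1)))"

lemma Sp_deriv: "((\<lambda>t. Sp n b t) has_field_derivative Sd n b t) (at t)"
proof -
  have p: "((\<lambda>x. x^m) has_field_derivative of_nat m * t^(m-1)) (at t)" for m :: nat
    using DERIV_power[OF DERIV_ident, of m t] by simp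
  show ?thesis unfolding Sp_def Sd_def
    by (intro DERIV_sum DERIV_cmult p)
qed

lemma Sp_key: "Sp (Suc l) b t - b * Sd (Suc l) b t = t * Sp l b t"
proof -
  have A: "Sp (Suc l) b t = t^(Suc l) + (\<Sum>k\<le>l. cco (Suc l) (Suc k) * b^(Suc k) * t^(l-k))"
    unfolding Sp_def by (subst sum.atMost_Suc_shift) (simp add: cco_def)
  have B: "b * Sd (Suc l) b t = (\<Sum>k\<le>l. of_nat (Suc l - k) * cco (Suc l) k * b^(Suc k) * t^(l-k))"
    unfolding Sd_def by (simp add: sum_distrib_left Suc_diff_le algebra_simps)
  have C: "t * Sp l b t = t^(Suc l) + (\<Sum>k\<le>l. cco l (Suc k) * b^(Suc k) * t^(l-k))"
  proof -
    have "t * Sp l b t = (\<Sum>k\<le>l. cco l k * b^k * t^(Suc l-k))"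
      unfolding Sp_def by (simp add: sum_distrib_left Suc_diff_le algebra_simps)
    also have "\<dots> = (\<Sum>k\<le>Suc l. cco l k * b^k * t^(Suc l-k))"
      using cco_zero[of l] by simp
    also have "\<dots> = t^(Suc l) + (\<Sum>k\<le>l. cco l (Suc k) * b^(Suc k) * t^(l-k))"
      by (subst sum.atMost_Suc_shift) (simp add: cco_def)
    finally show ?thesis .
  qed
  have D: "\<And>k. k \<in> {..l} \<Longrightarrow> cco (Suc l) (Suc k) * b^(Suc k) * t^(l-k) - of_nat (Suc l - k) * cco (Suc l) k * b^(Suc k) * t^(l-k)
     = cco l (Suc k) * b^(Suc k) * t^(l-k)"
  proof -
    fix k assume "k \<in> {..l}"
    hence "cco (l+1) (k+1) - cco l (k+1) = of_nat (l+1-k) * cco (l+1) k" by (intro cco_rec) simp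
    hence "cco (Suc l) (Suc k) = cco l (Suc k) + of_nat (Suc l - k) * cco (Suc l) k" by (simp add: algebra_simps)
    thus "cco (Suc l) (Suc k) * b^(Suc k) * t^(l-k) - of_nat (Suc l - k) * cco (Suc l) k * b^(Suc k) * t^(l-k)
     = cco l (Suc k) * b^(Suc k) * t^(l-k)" by (simp add: algebra_simps)
  qed
  have E: "(\<Sum>k\<le>l. cco (Suc l) (Suc k) * b^(Suc k) * t^(l-k)) - (\<Sum>k\<le>l. of_nat (Suc l - k) * cco (Suc l) k * b^(Suc k) * t^(l-k))
     = (\<Sum>k\<le>l. cco l (Suc k) * b^(Suc k) * t^(l-k))"
    by (simp only: sum_subtractf[symmetric]) (rule sum.cong[OF refl D])
  show ?thesis unfolding A B C using E by (simp add: algebra_simps)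
qed


lemma exp_deriv: "((\<lambda>t. exp (- a * t)) has_field_derivative exp (- a * t) * (- a)) (at t)"
  by (auto intro!: derivative_eq_intros)

lemma g_deriv: "((\<lambda>t. exp (- a * t) * Ppoly (Suc l) t a) has_field_derivative 2 * t * (exp (- a * t) * Ppoly l t a)) (at t)"
proof (cases "a = 0")
  case True
  define C :: complex where "C = 2 ^ (Suc l + 1) / of_nat (odd_dfact (Suc l))"
  have f: "(\<lambda>t. exp (- a * t) * Ppoly (Suc l) t a) = (\<lambda>t. C * t ^ (2 * Suc l + 1))"
    by (rule ext) (simp add: Ppoly_def C_def True)
  have p: "((\<lambda>t. C * t ^ (2 * Suc l + 1)) has_field_derivative C * (of_nat (2 * Suc l + 1) * (1 * t^(2 * Suc l + 1 - Suc 0)))) (at t)"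
    by (rule DERIV_cmult[OF DERIV_power[OF DERIV_ident]])
  have od: "odd_dfact (Suc l) = odd_dfact l * (2*l+3)"
    unfolding odd_dfact_def by (simp add: algebra_simps)
  define D :: complex where "D = of_nat (odd_dfact l)"
  define E :: complex where "E = of_nat (2 * Suc l + 1)"
  have DE: "D \<noteq> 0" "E \<noteq> 0"
    unfolding D_def E_def odd_dfact_def of_nat_eq_0_iff by auto
  have C': "C = 2 ^ (l + 2) / (D * E)"
    unfolding C_def D_def E_def od by simp
  have P0: "Ppoly l t a = 2 ^ (l+1) / D * t ^ (2 * l + 1)"
    unfolding Ppoly_def D_def using True by simp
  have t: "t ^ (2 * Suc l + 1 - Suc 0) = t * t ^ (2 * l + 1)" by simp
  have eq: "C * (of_nat (2 * Suc l + 1) * (1 * t^(2 * Suc l + 1 - Suc 0))) = 2 * t * (exp (- a * t) * Ppoly l t a)"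
    unfolding E_def[symmetric] C' P0 t using DE True by (simp add: field_simps)
  show ?thesis unfolding f using p unfolding eq .
next
  case False
  define b where "b = inverse a"
  have P: "Ppoly n t a = (-2/a)^(n+1) * Sp n b t" for n t
    using False unfolding Ppoly_def Sp_def b_def by simp
  have d: "((\<lambda>t. exp (- a * t) * Ppoly (Suc l) t a) has_field_derivative
     exp (- a * t) * (- a) * ((-2/a)^(Suc l+1) * Sp (Suc l) b t) + ((-2/a)^(Suc l+1) * Sd (Suc l) b t) * exp (- a * t)) (at t)"
    unfolding P by (intro DERIV_mult exp_deriv DERIV_cmult Sp_deriv)
  have k: "t * Sp l b t = Sp (Suc l) b t - b * Sd (Suc l) b t" using Sp_key by simp
  have "exp (- a * t) * (- a) * ((-2/a)^(Suc l+1) * Sp (Suc l) b t) + ((-2/a)^(Suc l+1) * Sd (Suc l) b t) * exp (- a * t)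
     = 2 * exp (- a * t) * (-2/a)^(l+1) * (Sp (Suc l) b t - b * Sd (Suc l) b t)"
    using False unfolding b_def by (simp add: field_simps)
  also have "\<dots> = 2 * t * (exp (- a * t) * Ppoly l t a)"
    unfolding P k[symmetric] by (simp add: algebra_simps)
  finally show ?thesis using d by simp
qed


lemma ev_ne0: "t \<noteq> 0 \<Longrightarrow> (\<forall>x. x \<noteq> 0 \<longrightarrow> f x = g x) \<Longrightarrow> eventually (\<lambda>x. f x = g x) (nhds (t::complex))"
proof -
  assume t: "t \<noteq> 0" and fg: "\<forall>x. x \<noteq> 0 \<longrightarrow> f x = g x"
  have "eventually (\<lambda>x. x \<in> - {0}) (nhds t)"
    using t by (intro eventually_nhds_in_open) auto
  thus ?thesis by eventually_elim (use fg in auto)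
qed

lemma Dop_pow_cong: "\<forall>x. x \<noteq> 0 \<longrightarrow> f x = g x \<Longrightarrow> \<forall>x. x \<noteq> 0 \<longrightarrow> (Dop ^^ n) f x = (Dop ^^ n) g x"
proof (induction n)
  case 0 thus ?case by simp
next
  case (Suc n)
  hence IH: "\<forall>x. x \<noteq> 0 \<longrightarrow> (Dop ^^ n) f x = (Dop ^^ n) g x" by blast
  show ?case
  proof (intro allI impI)
    fix x :: complex assume "x \<noteq> 0"
    hence "deriv ((Dop ^^ n) f) x = deriv ((Dop ^^ n) g) x"
      by (intro deriv_cong_ev ev_ne0 IH) auto
    thus "(Dop ^^ Suc n) f x = (Dop ^^ Suc n) g x" by (simp add: Dop_def)
  qed
qed

lemma Dop_G: "t \<noteq> 0 \<Longrightarrow> Dop (\<lambda>t. exp (- a * t) * Ppoly (Suc l) t a) t = exp (- a * t) * Ppoly l t a"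
  unfolding Dop_def using DERIV_imp_deriv[OF g_deriv] by simp

lemma iter_G: "\<forall>t. t \<noteq> 0 \<longrightarrow> (Dop ^^ n) (\<lambda>t. exp (- a * t) * Ppoly (m + n) t a) t = exp (- a * t) * Ppoly m t a"
proof (induction n arbitrary: m)
  case 0 thus ?case by simp
next
  case (Suc n)
  have "\<forall>t. t \<noteq> 0 \<longrightarrow> Dop (\<lambda>t. exp (- a * t) * Ppoly (Suc (m + n)) t a) t = exp (- a * t) * Ppoly (m + n) t a"
    using Dop_G by blast
  hence "\<forall>t. t \<noteq> 0 \<longrightarrow> (Dop ^^ n) (Dop (\<lambda>t. exp (- a * t) * Ppoly (Suc (m + n)) t a)) t = (Dop ^^ n) (\<lambda>t. exp (- a * t) * Ppoly (m + n) t a) t"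
    by (rule Dop_pow_cong)
  thus ?case using Suc.IH[of m] by (simp add: funpow_Suc_right del: funpow.simps)
qed

theorem mainTheorem7:
  fixes l :: nat and a s :: complex
  assumes "s \<noteq> 0"
  shows "deriv ((Dop ^^ l) (\<lambda>t. exp (- a * t) * Ppoly l t a)) s = 2 * exp (- a * s)"
proof -
  have "deriv ((Dop ^^ l) (\<lambda>t. exp (- a * t) * Ppoly l t a)) s = deriv (\<lambda>t. exp (- a * t) * Ppoly 0 t a) s"
    using iter_G[of l a 0] by (intro deriv_cong_ev ev_ne0 assms) auto
  also have "\<dots> = 2 * exp (- a * s)"
  proof (cases "a = 0")
    case True
    have "(\<lambda>t. exp (- a * t) * Ppoly 0 t a) = (\<lambda>t. 2 * t)"
      using True by (auto simp: Ppoly_def odd_dfact_def)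
    thus ?thesis using True by (simp add: DERIV_imp_deriv DERIV_cmult_Id)
  next
    case False
    have "(\<lambda>t. exp (- a * t) * Ppoly 0 t a) = (\<lambda>t. exp (- a * t) * (- 2 / a))"
      using False by (auto simp: Ppoly_def cco_def)
    moreover have "((\<lambda>t. exp (- a * t) * (- 2 / a)) has_field_derivative exp (- a * s) * (- a) * (- 2 / a)) (at s)"
      by (intro DERIV_cmult_right exp_deriv)
    ultimately show ?thesis using False by (simp add: DERIV_imp_deriv)
  qed
  finally show ?thesis .
qed

end
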